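(* The function $h_1(x)=\exp\bigl(\cot(x)\bigr)$ is completely monotonic on $(0,\pi/2]$, and the function $h_2(x)=\exp\left(\dfrac{1}{1+\tan(x)}\right)$ is completely monotonic on $(-\pi/4,\pi/4]$.
   Context: A function $f:I\to\mathbb{R}$ on an interval $I\subset\mathbb{R}$ is completely monotonic if it has derivatives of all orders and $(-1)^n f^{(n)}(x)\ge 0$ for all $n=0,1,2,\dots$ and $x\in I$. *)

theory Defs
  imports "HOL-Analysis.Analysis"
begin

definition completely_monotonic_on :: "(real \<Rightarrow> real) \<Rightarrow> real set \<Rightarrow> bool" where
  "completely_monotonic_on f I \<longleftrightarrow>
     (\<exists>D :: nat \<Rightarrow> real \<Rightarrow> real.
        (\<forall>x\<in>I. D 0 x = f x) \<and>
        (\<forall>n. \<forall>x\<in>I. (D n has_real_derivative D (Suc n) x) (at x within I)) \<and>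
        (\<forall>n. \<forall>x\<in>I. (-1) ^ n * D n x \<ge> 0))"

end

theory Submission
  imports Defs "HOL-Computational_Algebra.Polynomial"
begin

definition nnc :: "real poly \<Rightarrow> bool" where
  "nnc p \<longleftrightarrow> (\<forall>i. coeff p i \<ge> 0)"

lemma nnc_add: "nnc p \<Longrightarrow> nnc q \<Longrightarrow> nnc (p + q)"
  unfolding nnc_def by (simp add: add_nonneg_nonneg)

lemma nnc_mult: "nnc p \<Longrightarrow> nnc q \<Longrightarrow> nnc (p * q)"
  unfolding nnc_def coeff_mult by (auto intro!: sum_nonneg)

lemma nnc_pderiv: "nnc p \<Longrightarrow> nnc (pderiv p)"
  unfolding nnc_def coeff_pderiv by simp

lemma nnc_poly: "nnc p \<Longrightarrow> (v::real) \<ge> 0 \<Longrightarrow> poly p v \<ge> 0"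
  unfolding nnc_def poly_altdef by (auto intro!: sum_nonneg)

lemma nnc_one: "nnc 1"
  unfolding nnc_def by (simp add: coeff_1)

primrec PP :: "real poly \<Rightarrow> nat \<Rightarrow> real poly" where
  "PP Q 0 = 1"
| "PP Q (Suc n) = Q * (pderiv (PP Q n) + PP Q n)"

lemma nnc_PP: "nnc Q \<Longrightarrow> nnc (PP Q n)"
  by (induction n) (auto intro: nnc_one nnc_mult nnc_add nnc_pderiv)

lemma cm_generic:
  assumes w: "\<And>x. x \<in> I \<Longrightarrow> (w has_real_derivative - poly Q (w x)) (at x within I)"
    and wnn: "\<And>x. x \<in> I \<Longrightarrow> w x \<ge> 0"
    and Q: "nnc Q" and K: "K \<ge> 0"
    and f: "\<And>x. x \<in> I \<Longrightarrow> f x = K * exp (w x)"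
  shows "completely_monotonic_on f I"
  unfolding completely_monotonic_on_def
proof (intro exI conjI ballI allI)
  define D where "D = (\<lambda>n x. (-1) ^ n * K * (poly (PP Q n) (w x) * exp (w x)))"
  show "D 0 x = f x" if "x \<in> I" for x using f[OF that] by (simp add: D_def)
  show "(D n has_real_derivative D (Suc n) x) (at x within I)" if "x \<in> I" for n x
  proof -
    have d1: "((\<lambda>x. poly (PP Q n) (w x)) has_real_derivative
        poly (pderiv (PP Q n)) (w x) * (- poly Q (w x))) (at x within I)"
      by (rule DERIV_chain2[OF poly_DERIV w[OF that]])
    have d2: "((\<lambda>x. exp (w x)) has_real_derivative exp (w x) * (- poly Q (w x))) (at x within I)"
      by (rule DERIV_chain2[OF DERIV_exp w[OF that]])
    note d3 = DERIV_cmult[OF DERIV_mult[OF d1 d2], of "(-1)^n*K"]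
    show ?thesis unfolding D_def
      by (rule DERIV_cong[OF d3]) (simp add: algebra_simps)
  qed
  show "(-1) ^ n * D n x \<ge> 0" if "x \<in> I" for n x
  proof -
    have "(-1) ^ n * D n x = K * (poly (PP Q n) (w x) * exp (w x))"
      by (simp add: D_def flip: power_add mult_2 mult.assoc)
    also have "\<dots> \<ge> 0" using K nnc_poly[OF nnc_PP[OF Q] wnn[OF that]] by simp
    finally show ?thesis .
  qed
qed

lemma aux: "(u::real) \<noteq> 0 \<Longrightarrow> (1 + (u - 1)\<^sup>2) / u\<^sup>2 = 1/2 + (1/u - 1/2) * (1/u - 1/2) * 2"
  by (simp add: field_simps power2_eq_square)

lemma aux2: "1 + (t::real) \<noteq> 0 \<Longrightarrow> (1 + t\<^sup>2) / (1 + t)\<^sup>2 = 1/2 + (1/(1+t) - 1/2) * (1/(1+t) - 1/2) * 2"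
  using aux[of "1+t"] by simp

theorem corollary1:
  shows "completely_monotonic_on (\<lambda>x. exp (cot x)) {0<..pi/2}
       \<and> completely_monotonic_on (\<lambda>x. exp (1 / (1 + tan x))) {-(pi/4)<..pi/4}"
proof
  show "completely_monotonic_on (\<lambda>x. exp (cot x)) {0<..pi/2}"
  proof (rule cm_generic[where w=cot and Q="[:1,0,1:]" and K=1])
    fix x assume x: "x \<in> {0<..pi/2}"
    then have s: "sin x > 0" using pi_gt_zero by (intro sin_gt_zero) auto
    have c: "cos x \<ge> 0" using x by (intro cos_ge_zero) auto
    show "cot x \<ge> 0" using s c by (simp add: cot_def)
    have "(cot has_real_derivative - inverse ((sin x)\<^sup>2)) (at x)" using s by simp
    moreover have "- inverse ((sin x)\<^sup>2) = - poly [:1,0,1:] (cot x)"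
      using s sin_squared_eq[of x] by (simp add: cot_def field_simps power2_eq_square)
    ultimately show "(cot has_real_derivative - poly [:1,0,1:] (cot x)) (at x within {0<..pi/2})"
      by (metis has_field_derivative_at_within)
  qed (auto simp: nnc_def coeff_pCons split: nat.splits)
next
  show "completely_monotonic_on (\<lambda>x. exp (1 / (1 + tan x))) {-(pi/4)<..pi/4}"
  proof (rule cm_generic[where w="\<lambda>x. 1 / (1 + tan x) - 1/2" and Q="[:1/2,0,2:]" and K="exp (1/2)"])
    fix x assume x: "x \<in> {-(pi/4)<..pi/4}"
    have t1: "tan x \<le> 1" using x tan_mono_le[of x "pi/4"] by (auto simp: tan_45)
    have t2: "tan x > -1" using x tan_monotone[of "-(pi/4)" x] by (auto simp: tan_45)
    have c: "cos x > 0" using x by (intro cos_gt_zero_pi) auto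
    show "1 / (1 + tan x) - 1/2 \<ge> 0" using t1 t2 by (simp add: field_simps)
    show "exp (1 / (1 + tan x)) = exp (1/2) * exp (1 / (1 + tan x) - 1/2)"
      by (simp flip: exp_add)
    have "((\<lambda>x. 1 / (1 + tan x) - 1/2) has_real_derivative
        - (1 * (inverse ((cos x)\<^sup>2))) / (1 + tan x)^2 - 0) (at x)"
      using c t2 by (auto intro!: derivative_eq_intros simp: power2_eq_square)
    moreover have "- (1 * (inverse ((cos x)\<^sup>2))) / (1 + tan x)^2 - 0
        = - poly [:1/2,0,2:] (1 / (1 + tan x) - 1/2)"
    proof -
      have sec: "inverse ((cos x)\<^sup>2) = 1 + (tan x)\<^sup>2"
        using c sin_squared_eq[of x] by (simp add: tan_def field_simps power2_eq_square)
      have ne: "1 + tan x \<noteq> 0" using t2 by simp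
      have "- (1 * (1 + (tan x)\<^sup>2)) / (1 + tan x)^2 - 0 = - ((1 + (tan x)\<^sup>2) / (1 + tan x)^2)"
        by (simp add: minus_divide_left)
      also have "\<dots> = - (1/2 + (1/(1+tan x) - 1/2) * (1/(1+tan x) - 1/2) * 2)"
        using aux2[OF ne] by simp
      also have "\<dots> = - poly [:1/2,0,2:] (1 / (1 + tan x) - 1/2)"
        by (simp add: mult.commute)
      finally show ?thesis unfolding sec .
    qed
    ultimately show "((\<lambda>x. 1 / (1 + tan x) - 1/2) has_real_derivative
        - poly [:1/2,0,2:] (1 / (1 + tan x) - 1/2)) (at x within {-(pi/4)<..pi/4})"
      by (metis has_field_derivative_at_within)
  qed (auto simp: nnc_def coeff_pCons split: nat.splits)
qed

end
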